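(* Let $\mathcal{M},\mathcal{N}\subset\mathbb{R}^n$ satisfy the regularity assumption at $\bar x\in\mathcal{M}\cap\mathcal{N}$ and let $S=(1-\alpha)I+\alpha\Pi^{\alpha_2}_{\mathcal{M}}\Pi^{\alpha_1}_{\mathcal{N}}$ be the generalized alternating projections operator. Then the Jacobian of $S$ at $\bar x$ is $$DS(\bar x) = (1-\alpha)I+\alpha\Pi^{\alpha_2}_{T_{\mathcal{M}}(\bar x)}\Pi^{\alpha_1}_{T_{\mathcal{N}}(\bar x)}.$$
   Context: $\Pi_C$ is the projection onto $C$ and $\Pi_C^\alpha := (1-\alpha)I+\alpha\Pi_C$. A set $\mathcal{M}$ is a $\mathcal{C}^k$-manifold around $x$ if there is an open $U\ni x$ with $\mathcal{M}\cap U=\{y:F(y)=0\}$ for a $\mathcal{C}^k$ map $F:U\to\mathbb{R}^d$ with surjective derivative throughout $U$; $T_{\mathcal{M}}(x)=\ker DF(x)$. Regularity assumption at $x$: $\mathcal{M},\mathcal{N}$ are $\mathcal{C}^k$-smooth manifolds ($k\ge2$) around $x\in\mathcal{M}\cap\mathcal{N}$, $\mathcal{M}\cap\mathcal{N}$ is a $\mathcal{C}^k$ manifold around $x$, and $T_{\mathcal{M}\cap\mathcal{N}}(x)=T_{\mathcal{M}}(x)\cap T_{\mathcal{N}}(x)$. *)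

theory Defs
  imports "HOL-Analysis.Analysis"
begin

text \<open>Iterated directional (Frechet) derivatives: iter_deriv F [v1,...,vj] y = D^j F(y)[v1,...,vj].\<close>
fun iter_deriv :: "('a::real_normed_vector \<Rightarrow> 'b::real_normed_vector) \<Rightarrow> 'a list \<Rightarrow> 'a \<Rightarrow> 'b" where
  "iter_deriv F [] = F"
| "iter_deriv F (v # vs) = (\<lambda>y. frechet_derivative (iter_deriv F vs) (at y) v)"

definition C_k_on :: "nat \<Rightarrow> 'a::real_normed_vector set \<Rightarrow> ('a \<Rightarrow> 'b::real_normed_vector) \<Rightarrow> bool" where
  "C_k_on k U F \<longleftrightarrow>
     (\<forall>vs. length vs \<le> k \<longrightarrow> continuous_on U (iter_deriv F vs)
        \<and> (length vs < k \<longrightarrow> iter_deriv F vs differentiable_on U))"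

text \<open>A local defining chart of M around x: F : U \<rightarrow> V (V a linear subspace, playing the role of R^d),
  C^k, with surjective derivative onto V throughout U, and M \<inter> U = F^{-1}(0).\<close>
definition manifold_chart :: "nat \<Rightarrow> 'a::euclidean_space set \<Rightarrow> 'a \<Rightarrow> 'a set \<Rightarrow> ('a \<Rightarrow> 'a) \<Rightarrow> 'a set \<Rightarrow> bool" where
  "manifold_chart k M x U F V \<longleftrightarrow>
     open U \<and> x \<in> U \<and> subspace V \<and> C_k_on k U F \<and>
     (\<forall>y\<in>U. F y \<in> V \<and> F differentiable (at y) \<and> range (frechet_derivative F (at y)) = V) \<and>
     M \<inter> U = {y \<in> U. F y = 0}"

definition manifold_around :: "nat \<Rightarrow> 'a::euclidean_space set \<Rightarrow> 'a \<Rightarrow> bool" where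
  "manifold_around k M x \<longleftrightarrow> (\<exists>U F V. manifold_chart k M x U F V)"

text \<open>Tangent space T_M(x) = ker DF(x) for a defining chart F (independent of the chart).\<close>
definition tangent_space :: "nat \<Rightarrow> 'a::euclidean_space set \<Rightarrow> 'a \<Rightarrow> 'a set" where
  "tangent_space k M x =
     (SOME T. \<exists>U F V. manifold_chart k M x U F V \<and> T = {v. frechet_derivative F (at x) v = 0})"

definition proj :: "'a::euclidean_space set \<Rightarrow> 'a \<Rightarrow> 'a" where
  "proj C y = (SOME z. z \<in> C \<and> (\<forall>w\<in>C. dist y z \<le> dist y w))"

definition relax_proj :: "real \<Rightarrow> 'a::euclidean_space set \<Rightarrow> 'a \<Rightarrow> 'a" where
  "relax_proj \<alpha> C y = (1 - \<alpha>) *\<^sub>R y + \<alpha> *\<^sub>R proj C y"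

definition regularity_assumption :: "nat \<Rightarrow> 'a::euclidean_space set \<Rightarrow> 'a set \<Rightarrow> 'a \<Rightarrow> bool" where
  "regularity_assumption k M N x \<longleftrightarrow>
     2 \<le> k \<and> x \<in> M \<inter> N \<and> manifold_around k M x \<and> manifold_around k N x \<and>
     manifold_around k (M \<inter> N) x \<and>
     tangent_space k (M \<inter> N) x = tangent_space k M x \<inter> tangent_space k N x"

end

theory Submission
  imports Defs "HOL-Analysis.Analysis"
begin


lemma proj_subspace_unique:
  fixes T :: "'a::euclidean_space set"
  assumes "y \<in> T" "\<And>w. w \<in> T \<Longrightarrow> (h - y) \<bullet> w = 0" "subspace T"
  shows "proj T h = y"
  unfolding proj_def
proof (rule some_equality)
  have d: "dist h w ^ 2 = dist h y ^ 2 + dist y w ^ 2" if "w \<in> T" for w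
  proof -
    have "y - w \<in> T" using assms(1) that assms(3) by (simp add: subspace_diff)
    then have o: "(h - y) \<bullet> (y - w) = 0" using assms(2) by blast
    have "h - w = (h - y) + (y - w)" by simp
    then have "norm (h - w) ^ 2 = norm (h - y) ^ 2 + norm (y - w) ^ 2"
      using o by (metis norm_add_Pythagorean orthogonal_def)
    then show ?thesis by (simp add: dist_norm)
  qed
  show "y \<in> T \<and> (\<forall>w\<in>T. dist h y \<le> dist h w)"
  proof (intro conjI ballI)
    fix w assume "w \<in> T"
    then have "dist h y ^ 2 \<le> dist h w ^ 2" using d by simp
    then show "dist h y \<le> dist h w" by (rule power2_le_imp_le) simp
  qed (fact assms(1))
  fix z assume z: "z \<in> T \<and> (\<forall>w\<in>T. dist h z \<le> dist h w)"
  then have "dist h z \<le> dist h y" using assms(1) by blast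
  then have "dist h z ^ 2 \<le> dist h y ^ 2" by (rule power_mono) simp
  moreover have "dist h z ^ 2 = dist h y ^ 2 + dist y z ^ 2" using d z by blast
  ultimately have "dist y z ^ 2 \<le> 0" by linarith
  then show "z = y" by simp
qed

lemma proj_subspace:
  fixes T :: "'a::euclidean_space set"
  assumes "subspace T"
  shows "proj T h \<in> T \<and> (\<forall>w\<in>T. (h - proj T h) \<bullet> w = 0)"
proof -
  have sT: "span T = T" using assms by (simp add: span_eq_iff)
  obtain y z where yz: "y \<in> span T" "\<And>w. w \<in> span T \<Longrightarrow> orthogonal z w" "h = y + z"
    using orthogonal_subspace_decomp_exists by blast
  have y: "y \<in> T" using yz(1) sT by simp
  have o: "(h - y) \<bullet> w = 0" if "w \<in> T" for w
    using yz(2)[of w] yz(3) that sT by (simp add: orthogonal_def)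
  have "proj T h = y" by (rule proj_subspace_unique[OF y o assms])
  with y o show ?thesis by simp
qed

lemma linear_proj_subspace:
  fixes T :: "'a::euclidean_space set"
  assumes T: "subspace T"
  shows "linear (proj T)"
proof (rule linearI)
  fix a b
  have pa: "proj T a \<in> T" "\<And>w. w \<in> T \<Longrightarrow> (a - proj T a) \<bullet> w = 0"
   and pb: "proj T b \<in> T" "\<And>w. w \<in> T \<Longrightarrow> (b - proj T b) \<bullet> w = 0"
    using proj_subspace[OF T] by auto
  show "proj T (a + b) = proj T a + proj T b"
  proof (rule proj_subspace_unique[OF _ _ T])
    show "proj T a + proj T b \<in> T" using pa pb T by (simp add: subspace_add)
    fix w assume "w \<in> T"
    have "(a + b - (proj T a + proj T b)) \<bullet> w = (a - proj T a) \<bullet> w + (b - proj T b) \<bullet> w"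
      by (simp add: algebra_simps inner_diff_left inner_add_left)
    then show "(a + b - (proj T a + proj T b)) \<bullet> w = 0" using pa pb \<open>w \<in> T\<close> by simp
  qed
next
  fix c :: real and a
  have pa: "proj T a \<in> T" "\<And>w. w \<in> T \<Longrightarrow> (a - proj T a) \<bullet> w = 0"
    using proj_subspace[OF T] by auto
  show "proj T (c *\<^sub>R a) = c *\<^sub>R proj T a"
  proof (rule proj_subspace_unique[OF _ _ T])
    show "c *\<^sub>R proj T a \<in> T" using pa T by (simp add: subspace_scale)
    fix w assume "w \<in> T"
    have "(c *\<^sub>R a - c *\<^sub>R proj T a) \<bullet> w = c * ((a - proj T a) \<bullet> w)"
      by (simp add: algebra_simps inner_diff_left)
    then show "(c *\<^sub>R a - c *\<^sub>R proj T a) \<bullet> w = 0" using pa \<open>w \<in> T\<close> by simp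
  qed
qed

lemma proj_self:
  assumes "x \<in> C" shows "proj C x = x"
  unfolding proj_def
proof (rule some_equality)
  show "x \<in> C \<and> (\<forall>w\<in>C. dist x x \<le> dist x w)" using assms by simp
  fix z assume "z \<in> C \<and> (\<forall>w\<in>C. dist x z \<le> dist x w)"
  then have "dist x z \<le> dist x x" using assms by blast
  then show "z = x" by simp
qed



lemma proj_pyth:
  fixes T :: "'a::euclidean_space set"
  assumes T: "subspace T"
  shows "norm v ^ 2 = norm (proj T v) ^ 2 + norm (v - proj T v) ^ 2"
proof -
  have "(v - proj T v) \<bullet> proj T v = 0" using proj_subspace[OF T] by blast
  then have "norm (proj T v + (v - proj T v)) ^ 2 = norm (proj T v) ^ 2 + norm (v - proj T v) ^ 2"
    by (intro norm_add_Pythagorean) (simp add: inner_commute orthogonal_def)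
  then show ?thesis by simp
qed

lemma real_est:
  fixes a b q m n \<eta> :: real
  assumes "0 \<le> a" "0 \<le> b" "0 \<le> q" "0 \<le> n" "0 \<le> \<eta>" "\<eta> \<le> 1"
    "q - m \<le> b" "q \<le> n" "a^2 + b^2 \<le> (q + \<eta> * n)^2" "m \<le> 2 * \<eta> * n"
  shows "a^2 \<le> 9 * \<eta> * n^2"
proof (cases "q \<le> 2 * \<eta> * n")
  case True
  have "a^2 \<le> (q + \<eta> * n)^2" using assms(9) zero_le_power2[of b] by linarith
  also have "\<dots> \<le> (3 * \<eta> * n)^2" using True assms by (intro power_mono) simp_all
  also have "\<dots> = 9 * \<eta> * (\<eta> * n^2)" by (simp add: power2_eq_square)
  also have "\<dots> \<le> 9 * \<eta> * n^2"
  proof (intro mult_left_mono)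
    show "\<eta> * n^2 \<le> n^2" using assms mult_right_mono[of \<eta> 1 "n^2"] by simp
  qed (use assms in auto)
  finally show ?thesis .
next
  case False
  then have f1: "0 \<le> q - 2 * \<eta> * n" by simp
  have f2: "q - 2 * \<eta> * n \<le> b" using assms by linarith
  have "(q - 2 * \<eta> * n)^2 \<le> b^2" by (rule power_mono[OF f2 f1])
  then have "a^2 \<le> (q + \<eta> * n)^2 - (q - 2 * \<eta> * n)^2" using assms by linarith
  also have "\<dots> = \<eta> * (6 * q * n - 3 * \<eta> * n^2)" by (simp add: power2_eq_square algebra_simps)
  also have "\<dots> \<le> \<eta> * (9 * n^2)"
  proof (intro mult_left_mono)
    have "q * n \<le> n * n" using assms by (intro mult_right_mono) auto
    then have h1: "6 * q * n \<le> 6 * n^2" by (simp add: power2_eq_square mult.assoc)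
    have h2: "0 \<le> 3 * \<eta> * n^2" using assms by simp
    have h3: "0 \<le> n^2" by simp
    from h1 h2 h3 show "6 * q * n - 3 * \<eta> * n^2 \<le> 9 * n^2" by linarith
  qed fact
  finally show ?thesis by simp
qed

lemma deriv_from_estimates:
  fixes M T :: "'a::euclidean_space set" and x :: 'a and pr :: "'a \<Rightarrow> 'a"
  assumes T: "subspace T"
  and near: "\<exists>r>0. \<forall>y. norm (y - x) < r \<longrightarrow> pr y \<in> M \<and> (\<forall>w\<in>M. norm (y - pr y) \<le> norm (y - w))"
  and xM: "x \<in> M"
  and A: "\<forall>e>0. \<exists>d>0. \<forall>p\<in>M. norm (p - x) < d \<longrightarrow> norm ((p - x) - proj T (p - x)) \<le> e * norm (p - x)"
  and B: "\<forall>e>0. \<exists>d>0. \<forall>t\<in>T. norm t < d \<longrightarrow> (\<exists>z\<in>M. norm (z - x - t) \<le> e * norm t)"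
  shows "(pr has_derivative proj T) (at x)"
  unfolding has_derivative_at_alt
proof (intro conjI allI impI)
  have lin: "linear (proj T)" by (rule linear_proj_subspace[OF T])
  then show "bounded_linear (proj T)" by (simp add: linear_conv_bounded_linear)
  obtain r where r: "r > 0" "\<And>y. norm (y - x) < r \<Longrightarrow> pr y \<in> M \<and> (\<forall>w\<in>M. norm (y - pr y) \<le> norm (y - w))"
    using near by blast
  have px: "pr x = x" using r(2)[of x] r(1) xM by fastforce
  fix e :: real assume e: "e > 0"
  define s where "s = min 1 (e/5)"
  have s: "0 < s" "s \<le> 1" "5 * s \<le> e" using e by (auto simp: s_def)
  define \<eta> where "\<eta> = s^2"
  have \<eta>: "0 < \<eta>" "\<eta> \<le> 1" "\<eta> \<le> s" using s by (auto simp: \<eta>_def power2_eq_square mult_le_one)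
  obtain dA where dA: "dA > 0" "\<And>p. p \<in> M \<Longrightarrow> norm (p - x) < dA \<Longrightarrow> norm ((p - x) - proj T (p - x)) \<le> \<eta> * norm (p - x)"
    using A \<eta>(1) by blast
  obtain dB where dB: "dB > 0" "\<And>t. t \<in> T \<Longrightarrow> norm t < dB \<Longrightarrow> (\<exists>z\<in>M. norm (z - x - t) \<le> \<eta> * norm t)"
    using B \<eta>(1) by blast
  show "\<exists>d>0. \<forall>y. norm (y - x) < d \<longrightarrow> norm (pr y - pr x - proj T (y - x)) \<le> e * norm (y - x)"
  proof (intro exI[of _ "min r (min (dA/2) dB)"] conjI allI impI)
    show "0 < min r (min (dA/2) dB)" using r dA dB by simp
    fix y assume y: "norm (y - x) < min r (min (dA / 2) dB)"
    define h where "h = y - x"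
    define p where "p = pr y"
    define w where "w = p - x"
    define P where "P = proj T"
    have pM: "p \<in> M" and pn: "\<And>z. z \<in> M \<Longrightarrow> norm (y - p) \<le> norm (y - z)"
      using r(2)[of y] y by (auto simp: p_def)
    have hw: "h - w = y - p" by (simp add: h_def w_def)
    have "norm (h - w) = norm (y - p)" using hw by simp
    also have "\<dots> \<le> norm (y - x)" using pn[OF xM] .
    finally have "norm (h - w) \<le> norm h" by (simp add: h_def)
    then have wn: "norm w \<le> 2 * norm h" using norm_triangle_ineq4[of h "h - w"] by simp
    have "norm w < dA" using wn y by (simp add: h_def)
    then have mA: "norm (w - P w) \<le> 2 * \<eta> * norm h"
    proof -
      have "norm (w - P w) \<le> \<eta> * norm w" using dA(2)[OF pM] \<open>norm w < dA\<close> by (simp add: w_def P_def)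
      also have "\<dots> \<le> \<eta> * (2 * norm h)" using wn \<eta> by (intro mult_left_mono) auto
      finally show ?thesis by simp
    qed
    have PhT: "P h \<in> T" using proj_subspace[OF T] by (simp add: P_def)
    have pyh: "norm h ^ 2 = norm (P h) ^ 2 + norm (h - P h) ^ 2" unfolding P_def by (rule proj_pyth[OF T])
    have "norm (P h) ^ 2 \<le> norm h ^ 2" using pyh by simp
    then have Phn: "norm (P h) \<le> norm h" by (rule power2_le_imp_le) simp
    have "norm (h - P h) ^ 2 \<le> norm h ^ 2" using pyh by simp
    then have qn: "norm (h - P h) \<le> norm h" by (rule power2_le_imp_le) simp
    have "norm (P h) < dB" using Phn y by (simp add: h_def)
    then obtain z where zM: "z \<in> M" and z: "norm (z - x - P h) \<le> \<eta> * norm (P h)"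
      using dB(2)[OF PhT] by blast
    have "norm (h - w) \<le> norm (y - z)" using pn[OF zM] hw by simp
    also have "y - z = (h - P h) - (z - x - P h)" by (simp add: h_def)
    also have "norm \<dots> \<le> norm (h - P h) + norm (z - x - P h)" by (rule norm_triangle_ineq4)
    also have "\<dots> \<le> norm (h - P h) + \<eta> * norm h"
    proof -
      have "\<eta> * norm (P h) \<le> \<eta> * norm h" using Phn \<eta> by (intro mult_left_mono) auto
      then show ?thesis using z by linarith
    qed
    finally have hwn: "norm (h - w) \<le> norm (h - P h) + \<eta> * norm h" .
    have lin: "linear P" using lin by (simp add: P_def)
    have Pd: "P (h - w) = P h - P w" using lin by (simp add: linear_diff)
    have pyt: "norm (h - w) ^ 2 = norm (P h - P w) ^ 2 + norm ((h - P h) - (w - P w)) ^ 2"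
    proof -
      have "norm (h - w) ^ 2 = norm (P (h - w)) ^ 2 + norm ((h - w) - P (h - w)) ^ 2"
        unfolding P_def by (rule proj_pyth[OF T])
      moreover have "(h - w) - P (h - w) = (h - P h) - (w - P w)" unfolding Pd by (simp add: algebra_simps)
      ultimately show ?thesis unfolding Pd by simp
    qed
    have bq: "norm (h - P h) - norm (w - P w) \<le> norm ((h - P h) - (w - P w))"
      by (rule norm_triangle_ineq2)
    have sq: "norm (P h - P w) ^ 2 + norm ((h - P h) - (w - P w)) ^ 2 \<le> (norm (h - P h) + \<eta> * norm h) ^ 2"
    proof -
      have "norm (h - w) ^ 2 \<le> (norm (h - P h) + \<eta> * norm h) ^ 2"
        by (rule power_mono[OF hwn]) simp
      then show ?thesis using pyt by simp
    qed
    have "norm (P h - P w) ^ 2 \<le> 9 * \<eta> * norm h ^ 2"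
      by (rule real_est[OF _ _ _ _ _ _ bq qn sq mA]) (use \<eta> in auto)
    also have "\<dots> = (3 * s * norm h) ^ 2" by (simp add: \<eta>_def power2_eq_square)
    finally have a2: "norm (P h - P w) ^ 2 \<le> (3 * s * norm h) ^ 2" .
    have a: "norm (P h - P w) \<le> 3 * s * norm h"
      by (rule power2_le_imp_le[OF a2]) (use s in simp)
    have "norm (pr y - pr x - proj T (y - x)) = norm (w - P h)"
      by (simp add: px p_def w_def h_def P_def)
    also have "w - P h = (w - P w) - (P h - P w)" by simp
    also have "norm \<dots> \<le> norm (w - P w) + norm (P h - P w)" by (rule norm_triangle_ineq4)
    also have "\<dots> \<le> 2 * \<eta> * norm h + 3 * s * norm h" using mA a by linarith
    also have "\<dots> \<le> 5 * s * norm h" using \<eta> by (simp add: mult_right_mono)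
    also have "\<dots> \<le> e * norm (y - x)" using s by (simp add: h_def mult_right_mono)
    finally show "norm (pr y - pr x - proj T (y - x)) \<le> e * norm (y - x)" .
  qed
qed



lemma near_proj:
  fixes M U :: "'a::euclidean_space set" and F :: "'a \<Rightarrow> 'a"
  assumes U: "open U" "x \<in> U" and xM: "x \<in> M" and MU: "M \<inter> U = {y \<in> U. F y = 0}"
    and cF: "continuous_on U F"
  shows "\<exists>r>0. cball x (2 * r) \<subseteq> U \<and>
     (\<forall>y. norm (y - x) < r \<longrightarrow> proj M y \<in> M \<and> (\<forall>w\<in>M. norm (y - proj M y) \<le> norm (y - w)))"
proof -
  obtain r0 where r0: "r0 > 0" "cball x r0 \<subseteq> U" using U open_contains_cball by blast
  define r where "r = r0 / 2"
  have "r > 0" "cball x (2 * r) \<subseteq> U" using r0 by (auto simp: r_def)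
  moreover have "proj M y \<in> M \<and> (\<forall>w\<in>M. norm (y - proj M y) \<le> norm (y - w))"
    if y: "norm (y - x) < r" for y
  proof -
    define \<rho> where "\<rho> = norm (y - x)"
    have sub: "cball y \<rho> \<subseteq> U"
    proof
      fix z assume "z \<in> cball y \<rho>"
      have t: "dist z x \<le> dist z y + dist y x" by (rule dist_triangle)
      have a: "dist z y \<le> \<rho>" using \<open>z \<in> cball y \<rho>\<close> by (simp add: dist_commute)
      have b: "dist y x = \<rho>" by (simp add: \<rho>_def dist_norm)
      have "dist z x \<le> r0" using t a b y by (simp add: \<rho>_def r_def)
      then show "z \<in> U" using r0 by (auto simp: dist_commute)
    qed
    define S0 where "S0 = {z \<in> cball y \<rho>. F z = 0}"
    have cS0: "closed S0" unfolding S0_def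
      by (rule continuous_closed_preimage_constant) (use continuous_on_subset[OF cF sub] in auto)
    have xS0: "x \<in> S0" using xM U MU by (auto simp: S0_def \<rho>_def dist_norm)
    obtain z0 where z0: "z0 \<in> S0" "\<And>w. w \<in> S0 \<Longrightarrow> dist y z0 \<le> dist y w"
      using distance_attains_inf[OF cS0, of y] xS0 by blast
    have z0M: "z0 \<in> M" using z0(1) sub MU by (auto simp: S0_def)
    have z0n: "\<forall>w\<in>M. dist y z0 \<le> dist y w"
    proof
      fix w assume "w \<in> M"
      show "dist y z0 \<le> dist y w"
      proof (cases "w \<in> cball y \<rho>")
        case True
        then have "w \<in> S0" using \<open>w \<in> M\<close> sub MU by (auto simp: S0_def)
        then show ?thesis using z0 by blast
      next
        case False
        then show ?thesis using z0(1) by (auto simp: S0_def)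
      qed
    qed
    have "proj M y \<in> M \<and> (\<forall>w\<in>M. dist y (proj M y) \<le> dist y w)"
      unfolding proj_def by (rule someI[of _ z0]) (use z0M z0n in blast)
    then show ?thesis by (simp add: dist_norm)
  qed
  ultimately show ?thesis by blast
qed



lemma chart_proj_deriv:
  fixes M U V :: "'a::euclidean_space set" and F :: "'a \<Rightarrow> 'a"
  assumes ch: "manifold_chart k M x U F V" and k: "1 \<le> k" and xM: "x \<in> M"
  shows "(proj M has_derivative proj {v. frechet_derivative F (at x) v = 0}) (at x)"
proof -
  have U: "open U" "x \<in> U" and MU: "M \<inter> U = {y \<in> U. F y = 0}"
    and Fy: "\<And>y. y \<in> U \<Longrightarrow> F y \<in> V \<and> F differentiable (at y) \<and> range (frechet_derivative F (at y)) = V"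
    and Ck: "C_k_on k U F"
    using ch by (auto simp: manifold_chart_def)
  define DF where "DF y = frechet_derivative F (at y)" for y
  have hasD: "(F has_derivative DF y) (at y)" if "y \<in> U" for y
    using Fy[OF that] frechet_derivative_works by (auto simp: DF_def)
  have blD: "bounded_linear (DF y)" if "y \<in> U" for y
    using hasD[OF that] by (rule has_derivative_bounded_linear)
  have cF: "continuous_on U F"
    using Ck unfolding C_k_on_def by (metis iter_deriv.simps(1) le0 list.size(3))
  have cD: "continuous_on U (\<lambda>y. DF y i)" for i
  proof -
    have "length [i] \<le> k" using k by simp
    then have "continuous_on U (iter_deriv F [i])" using Ck unfolding C_k_on_def by blast
    then show ?thesis by (simp add: DF_def)
  qed
  define L where "L = DF x"
  define T where "T = {v. L v = 0}"
  define P where "P = proj T"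
  define LT where "LT = adjoint L"
  have linL: "linear L" using blD[OF U(2)] by (simp add: L_def bounded_linear.linear)
  have T: "subspace T" unfolding subspace_def T_def using linL by (simp add: linear_0 linear_add linear_scale)
  have linP: "linear P" unfolding P_def by (rule linear_proj_subspace[OF T])
  have linLT: "linear LT" unfolding LT_def by (rule adjoint_linear[OF linL])
  have PT: "P v \<in> T" for v using proj_subspace[OF T] by (simp add: P_def)
  have Portho: "(v - P v) \<bullet> w = 0" if "w \<in> T" for v w using proj_subspace[OF T] that by (simp add: P_def)
  have Pid: "P t = t" if "t \<in> T" for t using proj_self[OF that] by (simp add: P_def)
  have LTT: "LT u \<bullet> t = 0" if "t \<in> T" for u t
    using that adjoint_clauses(2)[OF linL, of u t] by (simp add: LT_def T_def)
  have LTL: "v \<bullet> LT (L v) = L v \<bullet> L v" for v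
    using adjoint_clauses(1)[OF linL, of v "L v"] by (simp add: LT_def)
  have LTLz: "L v = 0" if "LT (L v) = 0" for v
    using LTL[of v] that by simp
  define D where "D v = P v + LT (L v)" for v
  have linD: "linear D" unfolding D_def
    using linP linLT linL by (intro linear_compose_add linear_compose[of L LT, unfolded o_def]) auto
  have DT: "D t = t" if "t \<in> T" for t
    using that Pid linLT by (simp add: D_def T_def linear_0)
  have injD: "inj D"
    unfolding linear_injective_0[OF linD]
  proof (intro allI impI)
    fix v assume Dv: "D v = 0"
    have "P v \<bullet> D v = P v \<bullet> P v + P v \<bullet> LT (L v)" by (simp add: D_def inner_add_right)
    moreover have "P v \<bullet> LT (L v) = 0" using LTT[OF PT[of v], of "L v"] by (simp add: inner_commute)
    ultimately have "P v = 0" using Dv by simp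
    then have "LT (L v) = 0" using Dv by (simp add: D_def)
    then have "v \<in> T" using LTLz by (simp add: T_def)
    then show "v = 0" using Pid \<open>P v = 0\<close> by simp
  qed
  obtain Bi where linBi: "linear Bi" and BiD: "Bi \<circ> D = id"
    using linear_injective_left_inverse[OF linD injD] by blast
  have BiD': "Bi (D v) = v" for v using BiD by (metis comp_apply id_apply)
  have Qform: "v - P v = Bi (LT (L v))" for v
  proof -
    have "v = Bi (P v + LT (L v))" using BiD'[of v] by (simp add: D_def)
    also have "\<dots> = Bi (P v) + Bi (LT (L v))" using linBi by (simp add: linear_add)
    also have "Bi (P v) = P v" using BiD'[of "P v"] DT[OF PT[of v]] by simp
    finally have "v = P v + Bi (LT (L v))" .
    then show ?thesis by (metis add_diff_cancel_left')
  qed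
  obtain r where r: "r > 0" "cball x (2 * r) \<subseteq> U"
    "\<And>y. norm (y - x) < r \<Longrightarrow> proj M y \<in> M \<and> (\<forall>w\<in>M. norm (y - proj M y) \<le> norm (y - w))"
    using near_proj[OF U xM MU cF] by blast
  have Fx: "F x = 0" using xM U MU by auto
  have A: "\<forall>e>0. \<exists>d>0. \<forall>p\<in>M. norm (p - x) < d \<longrightarrow> norm ((p - x) - P (p - x)) \<le> e * norm (p - x)"
  proof (intro allI impI)
    fix e :: real assume e: "e > 0"
    have "linear (Bi \<circ> LT)" using linBi linLT by (rule linear_compose[of LT Bi, rotated])
    then obtain K where K: "K > 0" "\<And>v. norm ((Bi \<circ> LT) v) \<le> K * norm v"
      using linear_bounded_pos by blast
    have "\<forall>e>0. \<exists>d>0. \<forall>y. norm (y - x) < d \<longrightarrow> norm (F y - F x - L (y - x)) \<le> e * norm (y - x)"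
      using hasD[OF U(2)] unfolding has_derivative_at_alt L_def by blast
    then obtain d where d: "d > 0" "\<And>y. norm (y - x) < d \<Longrightarrow> norm (F y - F x - L (y - x)) \<le> (e / K) * norm (y - x)"
      using e K by (meson divide_pos_pos)
    show "\<exists>d>0. \<forall>p\<in>M. norm (p - x) < d \<longrightarrow> norm ((p - x) - P (p - x)) \<le> e * norm (p - x)"
    proof (intro exI[of _ "min d r"] conjI ballI impI)
      show "0 < min d r" using d r by simp
      fix p assume pM: "p \<in> M" and pd: "norm (p - x) < min d r"
      have "dist x p < r" using pd by (simp add: dist_norm norm_minus_commute)
      then have "p \<in> cball x (2 * r)" using r(1) by simp
      then have "p \<in> U" using r(2) by blast
      then have Fp: "F p = 0" using pM MU by auto
      have Lw: "norm (L (p - x)) \<le> (e / K) * norm (p - x)"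
        using d(2)[of p] pd Fp Fx by simp
      have "norm ((p - x) - P (p - x)) = norm ((Bi \<circ> LT) (L (p - x)))" using Qform by simp
      also have "\<dots> \<le> K * norm (L (p - x))" by (rule K(2))
      also have "\<dots> \<le> K * ((e / K) * norm (p - x))" using Lw K by (intro mult_left_mono) auto
      also have "\<dots> = e * norm (p - x)" using K by simp
      finally show "norm ((p - x) - P (p - x)) \<le> e * norm (p - x)" .
    qed
  qed
  \<comment> \<open>estimate B via the inverse function theorem\<close>
  define G where "G y = P (y - x) + LT (F y)" for y
  define G' where "G' y = Blinfun (\<lambda>v. P v + LT (DF y v))" for y
  have blP: "bounded_linear P" using linP by (simp add: linear_conv_bounded_linear)
  have blLT: "bounded_linear LT" using linLT by (simp add: linear_conv_bounded_linear)
  have blG': "bounded_linear (\<lambda>v. P v + LT (DF y v))" if "y \<in> U" for y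
  proof -
    have "bounded_linear (\<lambda>v. LT (DF y v))" using bounded_linear_compose[OF blLT blD[OF that]] .
    then show ?thesis by (rule bounded_linear_add[OF blP])
  qed
  have G'app: "blinfun_apply (G' y) = (\<lambda>v. P v + LT (DF y v))" if "y \<in> U" for y
    unfolding G'_def by (rule bounded_linear_Blinfun_apply[OF blG'[OF that]])
  have derG: "(G has_derivative blinfun_apply (G' y)) (at y)" if "y \<in> U" for y
  proof -
    have d1: "((\<lambda>y. y - x) has_derivative (\<lambda>v. v - 0)) (at y)"
      by (rule has_derivative_diff[OF has_derivative_ident has_derivative_const])
    have d2: "((\<lambda>y. P (y - x)) has_derivative (\<lambda>v. P (v - 0))) (at y)"
      by (rule bounded_linear.has_derivative[OF blP d1])
    have d3: "((\<lambda>y. LT (F y)) has_derivative (\<lambda>v. LT (DF y v))) (at y)"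
      by (rule bounded_linear.has_derivative[OF blLT hasD[OF that]])
    have "((\<lambda>y. P (y - x) + LT (F y)) has_derivative (\<lambda>v. P (v - 0) + LT (DF y v))) (at y)"
      by (rule has_derivative_add[OF d2 d3])
    then show ?thesis using G'app[OF that] by (simp add: G_def[abs_def])
  qed
  have contG': "continuous_on U G'"
  proof (rule continuous_on_blinfun_componentwise)
    fix i :: 'a
    have "continuous_on U (\<lambda>y. P i + LT (DF y i))"
    proof -
      have c1: "continuous_on U (\<lambda>y. LT (DF y i))"
        by (rule continuous_on_compose2[OF linear_continuous_on[OF blLT, of UNIV] cD]) simp
      show ?thesis by (rule continuous_on_add[OF continuous_on_const c1])
    qed
    then show "continuous_on U (\<lambda>y. blinfun_apply (G' y) i)"
      by (rule continuous_on_eq) (simp add: G'app)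
  qed
  have blBi: "bounded_linear Bi" using linBi by (simp add: linear_conv_bounded_linear)
  have invf: "Blinfun Bi o\<^sub>L G' x = id_blinfun"
  proof (rule blinfun_eqI)
    fix v
    have "blinfun_apply (G' x) v = D v" using G'app[OF U(2)] by (simp add: D_def L_def)
    then show "blinfun_apply (Blinfun Bi o\<^sub>L G' x) v = blinfun_apply id_blinfun v"
      by (simp add: bounded_linear_Blinfun_apply[OF blBi] BiD')
  qed
  obtain U' W g g' where U': "open U'" "U' \<subseteq> U" "x \<in> U'" and W: "open W" "G x \<in> W"
    and hom: "homeomorphism U' W G g"
    and derg: "\<And>y. y \<in> W \<Longrightarrow> (g has_derivative (g' y)) (at y)"
    and g': "\<And>y. y \<in> W \<Longrightarrow> g' y = inv (blinfun_apply (G' (g y)))"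
    and bij: "\<And>y. y \<in> W \<Longrightarrow> bij (blinfun_apply (G' (g y)))"
    using inverse_function_theorem[OF U(1) derG contG' U(2) invf] by blast
  have Gx: "G x = 0" using Fx linP linLT by (simp add: G_def linear_0)
  have gG: "\<And>y. y \<in> U' \<Longrightarrow> g (G y) = y" and Gg: "\<And>y. y \<in> W \<Longrightarrow> G (g y) = y"
    and gW: "g ` W = U'"
    using hom by (auto simp: homeomorphism_def)
  have g0: "g 0 = x" using gG[OF U'(3)] Gx by simp
  have W0: "0 \<in> W" using W Gx by simp
  have G'x: "blinfun_apply (G' x) = D" using G'app[OF U(2)] by (auto simp: D_def L_def)
  have g'0: "g' 0 t = t" if "t \<in> T" for t
  proof -
    have "g' 0 = inv D" using g'[OF W0] g0 G'x by simp
    moreover have "inv D (D t) = t" using injD by (simp add: inv_f_f)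
    ultimately show ?thesis using DT[OF that] by simp
  qed
  have B: "\<forall>e>0. \<exists>d>0. \<forall>t\<in>T. norm t < d \<longrightarrow> (\<exists>z\<in>M. norm (z - x - t) \<le> e * norm t)"
  proof (intro allI impI)
    fix e :: real assume e: "e > 0"
    obtain dW where dW: "dW > 0" "ball 0 dW \<subseteq> W" using W(1) W0 open_contains_ball by blast
    have "\<forall>e>0. \<exists>d>0. \<forall>y. norm (y - 0) < d \<longrightarrow> norm (g y - g 0 - g' 0 (y - 0)) \<le> e * norm (y - 0)"
      using derg[OF W0] unfolding has_derivative_at_alt by blast
    then obtain d where d: "d > 0" "\<And>y. norm y < d \<Longrightarrow> norm (g y - g 0 - g' 0 y) \<le> e * norm y"
      using e by auto
    show "\<exists>d>0. \<forall>t\<in>T. norm t < d \<longrightarrow> (\<exists>z\<in>M. norm (z - x - t) \<le> e * norm t)"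
    proof (intro exI[of _ "min d dW"] conjI ballI impI)
      show "0 < min d dW" using d dW by simp
      fix t assume tT: "t \<in> T" and tn: "norm t < min d dW"
      have tW: "t \<in> W" using tn dW by auto
      define z where "z = g t"
      have zU: "z \<in> U" using tW gW U'(2) by (auto simp: z_def)
      have Gz: "G z = t" using Gg[OF tW] by (simp add: z_def)
      have "LT (F z) = t - P (z - x)" using Gz by (simp add: G_def algebra_simps)
      then have LTFT: "LT (F z) \<in> T" using tT PT T by (simp add: subspace_diff)
      have "LT (F z) \<bullet> LT (F z) = 0" by (rule LTT[OF LTFT])
      then have LTF0: "LT (F z) = 0" by simp
      have "F z \<in> range (DF x)" using Fy[OF zU] Fy[OF U(2)] by (simp add: DF_def)
      then obtain u where u: "F z = L u" by (auto simp: L_def)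
      have "L u = 0" using LTF0 u LTLz by simp
      then have "F z = 0" using u by simp
      then have zM: "z \<in> M" using zU MU by auto
      have "norm (z - x - t) = norm (g t - g 0 - g' 0 t)" using g0 g'0[OF tT] by (simp add: z_def)
      also have "\<dots> \<le> e * norm t" using d(2) tn by simp
      finally show "\<exists>z\<in>M. norm (z - x - t) \<le> e * norm t" using zM by blast
    qed
  qed
  have near: "\<exists>r>0. \<forall>y. norm (y - x) < r \<longrightarrow> proj M y \<in> M \<and> (\<forall>w\<in>M. norm (y - proj M y) \<le> norm (y - w))"
    using r by blast
  have "(proj M has_derivative proj T) (at x)"
    by (rule deriv_from_estimates[OF T near xM]) (use A B in \<open>simp_all add: P_def\<close>)
  then show ?thesis by (simp add: T_def L_def DF_def)
qed



lemma tangent_proj_deriv: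
  assumes "manifold_around k M x" "1 \<le> k" "x \<in> M"
  shows "(proj M has_derivative proj (tangent_space k M x)) (at x)"
proof -
  have "\<exists>T U F V. manifold_chart k M x U F V \<and> T = {v. frechet_derivative F (at x) v = 0}"
    using assms(1) by (auto simp: manifold_around_def)
  then have "\<exists>U F V. manifold_chart k M x U F V \<and> tangent_space k M x = {v. frechet_derivative F (at x) v = 0}"
    unfolding tangent_space_def by (rule someI_ex)
  then obtain U F V where ch: "manifold_chart k M x U F V"
    and T: "tangent_space k M x = {v. frechet_derivative F (at x) v = 0}" by blast
  show ?thesis using chart_proj_deriv[OF ch assms(2,3)] T by simp
qed

lemma relax_deriv:
  assumes "manifold_around k M x" "1 \<le> k" "x \<in> M"
  shows "(relax_proj a M has_derivative relax_proj a (tangent_space k M x)) (at x)"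
proof -
  have "((\<lambda>y. (1 - a) *\<^sub>R y + a *\<^sub>R proj M y) has_derivative
        (\<lambda>h. (1 - a) *\<^sub>R h + a *\<^sub>R proj (tangent_space k M x) h)) (at x)"
    by (intro has_derivative_add has_derivative_scaleR_right has_derivative_ident
        tangent_proj_deriv[OF assms])
  then show ?thesis by (simp add: relax_proj_def[abs_def])
qed

theorem lemma5:
  fixes M N :: "'a::euclidean_space set" and xbar :: 'a and k :: nat and \<alpha> \<alpha>1 \<alpha>2 :: real
  assumes "regularity_assumption k M N xbar"
  shows "((\<lambda>y. (1 - \<alpha>) *\<^sub>R y + \<alpha> *\<^sub>R relax_proj \<alpha>2 M (relax_proj \<alpha>1 N y))
          has_derivative
          (\<lambda>h. (1 - \<alpha>) *\<^sub>R h + \<alpha> *\<^sub>R relax_proj \<alpha>2 (tangent_space k M xbar)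
                                          (relax_proj \<alpha>1 (tangent_space k N xbar) h)))
         (at xbar)"
proof -
  have k: "1 \<le> k" and xM: "xbar \<in> M" and xN: "xbar \<in> N"
    and mM: "manifold_around k M xbar" and mN: "manifold_around k N xbar"
    using assms by (auto simp: regularity_assumption_def)
  have rx: "relax_proj \<alpha>1 N xbar = xbar"
    by (simp add: relax_proj_def proj_self[OF xN] scaleR_diff_left)
  have dN: "(relax_proj \<alpha>1 N has_derivative relax_proj \<alpha>1 (tangent_space k N xbar)) (at xbar)"
    by (rule relax_deriv[OF mN k xN])
  have dM: "(relax_proj \<alpha>2 M has_derivative relax_proj \<alpha>2 (tangent_space k M xbar)) (at (relax_proj \<alpha>1 N xbar))"
    using relax_deriv[OF mM k xM] rx by simp
  have c: "((relax_proj \<alpha>2 M \<circ> relax_proj \<alpha>1 N) has_derivative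
          (relax_proj \<alpha>2 (tangent_space k M xbar) \<circ> relax_proj \<alpha>1 (tangent_space k N xbar))) (at xbar)"
    by (rule diff_chain_at[OF dN dM])
  have "((\<lambda>y. (1 - \<alpha>) *\<^sub>R y + \<alpha> *\<^sub>R (relax_proj \<alpha>2 M \<circ> relax_proj \<alpha>1 N) y) has_derivative
     (\<lambda>h. (1 - \<alpha>) *\<^sub>R h + \<alpha> *\<^sub>R (relax_proj \<alpha>2 (tangent_space k M xbar) \<circ> relax_proj \<alpha>1 (tangent_space k N xbar)) h)) (at xbar)"
    by (intro has_derivative_add has_derivative_scaleR_right has_derivative_ident c)
  then show ?thesis by (simp only: o_def)
qed

end
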